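(* Let $M\ge 2$ be an integer, $\kappa\ge 0$, $\beta>0$, $\phi\in[0,2\pi]$ and $\bm{\psi}=(\psi_1,\dots,\psi_{M-1})\in[0,2\pi]^{M-1}$ be fixed (deterministic), and let $\mathbf{R}\in\mathbb{R}^{M\times M}$ be a real symmetric positive semidefinite matrix with $R_{\scriptscriptstyle\sum}:=\mathbf{1}^T\mathbf{R}\,\mathbf{1}>0$. For $t\in\{1,\dots,M-1\}$ put $\Phi_t=-t\pi\sin\phi$, and define the vectors $\bm{\omega}_x,\bm{\omega}_y\in\mathbb{R}^M$ by $$\bm{\omega}_{x}=\big[1,\ \cos(\Phi_1+\psi_1)-\sin(\Phi_1+\psi_1),\ \dots,\ \cos(\Phi_{M-1}+\psi_{M-1})-\sin(\Phi_{M-1}+\psi_{M-1})\big]^T,$$ $$\bm{\omega}_{y}=\big[1,\ \cos(\Phi_1+\psi_1)+\sin(\Phi_1+\psi_1),\ \dots,\ \cos(\Phi_{M-1}+\psi_{M-1})+\sin(\Phi_{M-1}+\psi_{M-1})\big]^T.$$ Let $\mathbf{h}_x,\mathbf{h}_y$ be independent real Gaussian random vectors with $\mathbf{h}_x\sim\mathcal{N}\big(\sqrt{\tfrac{\kappa}{2(\kappa+1)}}\,\bm{\omega}_x,\ \tfrac{1}{2(\kappa+1)}\mathbf{R}\big)$ and $\mathbf{h}_y\sim\mathcal{N}\big(\sqrt{\tfrac{\kappa}{2(\kappa+1)}}\,\bm{\omega}_y,\ \tfrac{1}{2(\kappa+1)}\mathbf{R}\big)$, and let $\mathbf{h}^*=\mathbf{h}_x+\mathbbm{i}\,\mathbf{h}_y\in\mathbb{C}^M$.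 Define the random variable $$\xi^{\mathrm{rf}}_{\mathrm{aa-ss}}=\frac{\beta}{M}\big|\mathbf{1}^T\mathbf{h}^*\big|^2 .$$ Then $$\xi^{\mathrm{rf}}_{\mathrm{aa-ss}}\sim \frac{\beta R_{\scriptscriptstyle\sum}}{2(\kappa+1)M}\,\chi^2\Big(2,\ \frac{2\kappa f(\bm{\psi},\phi)}{R_{\scriptscriptstyle\sum}}\Big),$$ where $f(\bm{\psi},\phi)=\upsilon_1(\bm{\psi},\phi)^2+\upsilon_2(\bm{\psi},\phi)^2$ with $$\upsilon_1(\bm{\psi},\phi)=1+\sum_{t=1}^{M-1}\cos(\psi_t+\Phi_t),\qquad \upsilon_2(\bm{\psi},\phi)=\sum_{t=1}^{M-1}\sin(\psi_t+\Phi_t).$$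
   Context: $\mathbf{1}$ denotes the all-ones vector of length $M$ and $\mathbbm{i}=\sqrt{-1}$. $\mathcal{N}(\bm{\mu},\mathbf{C})$ denotes a real Gaussian random vector with mean $\bm{\mu}$ and covariance matrix $\mathbf{C}$. $\chi^2(m,n)$ denotes a non-central chi-squared random variable with $m$ degrees of freedom and non-centrality parameter $n$ (i.e. the distribution of $\sum_{k=1}^m Z_k^2$ with $Z_k$ independent, $Z_k\sim\mathcal{N}(\mu_k,1)$ and $\sum_k\mu_k^2=n$), and $X\sim c\,\chi^2(m,n)$ means $X$ has the distribution of $c$ times such a variable. Interpretation (not needed for the statement): $\mathbf{h}^*$ is the phase-adjusted Rician-fading channel vector from an $M$-antenna power beacon (half-wavelength uniform linear array, azimuth angle $\phi$, preventive phase shifts $\psi_t$, Rician factor $\kappa$, spatial correlation $\mathbf{R}$) to a single-antenna receiver, and $\xi^{\mathrm{rf}}_{\mathrm{aa-ss}}$ is the incident RF power when all antennas transmit the same signal with equal power $\beta/M$. *)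

theory Defs
  imports "HOL-Probability.Probability"
begin

definition normal_measure :: "real \<Rightarrow> real \<Rightarrow> real measure" where
  "normal_measure m v =
     (if v = 0 then return borel m else density lborel (normal_density m (sqrt v)))"

definition gaussian_vec ::
  "'a measure \<Rightarrow> nat \<Rightarrow> (nat \<Rightarrow> 'a \<Rightarrow> real) \<Rightarrow> (nat \<Rightarrow> real) \<Rightarrow> (nat \<Rightarrow> nat \<Rightarrow> real) \<Rightarrow> bool" where
  "gaussian_vec P n X mu C \<longleftrightarrow>
     (\<forall>i<n. X i \<in> borel_measurable P) \<and>
     (\<forall>a :: nat \<Rightarrow> real.
        distr P borel (\<lambda>\<omega>. \<Sum>i<n. a i * X i \<omega>) =
        normal_measure (\<Sum>i<n. a i * mu i) (\<Sum>i<n. \<Sum>j<n. a i * C i j * a j))"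

text \<open>Non-central chi-squared distribution chi2(m, nc): law of sum_{k<m} Z_k^2 with
  Z_k independent, Z_k ~ N(mu_k, 1), sum mu_k^2 = nc; we take mu = (sqrt nc, 0, ..., 0)
  (the law depends only on nc).\<close>
definition noncentral_chi2 :: "nat \<Rightarrow> real \<Rightarrow> real measure" where
  "noncentral_chi2 m nc =
     distr (PiM {..<m} (\<lambda>k. normal_measure (if k = 0 then sqrt nc else 0) 1)) borel
       (\<lambda>z. \<Sum>k<m. (z k)\<^sup>2)"

definition scaled_chi2_distributed ::
  "'a measure \<Rightarrow> ('a \<Rightarrow> real) \<Rightarrow> real \<Rightarrow> nat \<Rightarrow> real \<Rightarrow> bool" where
  "scaled_chi2_distributed P X c m nc \<longleftrightarrow>
     X \<in> borel_measurable P \<and>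
     distr P borel X = distr (noncentral_chi2 m nc) borel (\<lambda>x. c * x)"

end

theory Submission imports Defs begin

lemma lin_meas:
  "(\<lambda>p::real\<times>real. (a * fst p + b * snd p, c * fst p + d * snd p)) \<in> borel_measurable borel"
  by (intro borel_measurable_continuous_onI continuous_intros)

lemma comp_lin_meas[measurable]:
  fixes H :: "real \<times> real \<Rightarrow> ennreal"
  assumes "H \<in> borel_measurable borel"
  shows "(\<lambda>p. H (a * fst p + b * snd p, c * fst p + d * snd p)) \<in> borel_measurable borel"
  using measurable_comp[OF lin_meas assms] by (simp add: o_def)

lemma shear1:
  fixes H :: "real \<times> real \<Rightarrow> ennreal"
  assumes [measurable]: "H \<in> borel_measurable borel"
  shows "(\<integral>\<^sup>+p. H (fst p + t * snd p, snd p) \<partial>lborel) = (\<integral>\<^sup>+p. H p \<partial>lborel)"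
proof -
  have "(\<integral>\<^sup>+p. H (fst p + t * snd p, snd p) \<partial>lborel)
     = (\<integral>\<^sup>+p. H (fst p + t * snd p, snd p) \<partial>(lborel \<Otimes>\<^sub>M lborel))"
    by (simp only: lborel_prod)
  also have "\<dots> = (\<integral>\<^sup>+y. \<integral>\<^sup>+x. H (x + t * y, y) \<partial>lborel \<partial>lborel)"
  proof -
    have m: "(\<lambda>p. H (fst p + t * snd p, snd p)) \<in> borel_measurable (lborel \<Otimes>\<^sub>M lborel)"
      unfolding lborel_prod using comp_lin_meas[OF assms, of 1 t 0 1] by simp
    show ?thesis using lborel_pair.nn_integral_snd[OF m] by simp
  qed
  also have "\<dots> = (\<integral>\<^sup>+y. \<integral>\<^sup>+x. H (x, y) \<partial>lborel \<partial>lborel)"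
  proof (rule nn_integral_cong)
    fix y :: real
    show "(\<integral>\<^sup>+x. H (x + t * y, y) \<partial>lborel) = (\<integral>\<^sup>+x. H (x, y) \<partial>lborel)"
      using nn_integral_real_affine[of "\<lambda>x. H (x, y)" 1 "t * y"]
      by (simp add: add.commute)
  qed
  also have "\<dots> = (\<integral>\<^sup>+p. H p \<partial>(lborel \<Otimes>\<^sub>M lborel))"
  proof -
    have m: "H \<in> borel_measurable (lborel \<Otimes>\<^sub>M lborel)"
      unfolding lborel_prod using assms by simp
    show ?thesis using lborel_pair.nn_integral_snd[OF m] by simp
  qed
  also have "\<dots> = (\<integral>\<^sup>+p. H p \<partial>lborel)"
    by (simp only: lborel_prod)
  finally show ?thesis .
qed

lemma shear2:
  fixes H :: "real \<times> real \<Rightarrow> ennreal"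
  assumes [measurable]: "H \<in> borel_measurable borel"
  shows "(\<integral>\<^sup>+p. H (fst p, snd p + t * fst p) \<partial>lborel) = (\<integral>\<^sup>+p. H p \<partial>lborel)"
proof -
  have "(\<integral>\<^sup>+p. H (fst p, snd p + t * fst p) \<partial>lborel)
     = (\<integral>\<^sup>+p. H (fst p, snd p + t * fst p) \<partial>(lborel \<Otimes>\<^sub>M lborel))"
    by (simp only: lborel_prod)
  also have "\<dots> = (\<integral>\<^sup>+x. \<integral>\<^sup>+y. H (x, y + t * x) \<partial>lborel \<partial>lborel)"
  proof -
    have m: "(\<lambda>p. H (fst p, snd p + t * fst p)) \<in> borel_measurable (lborel \<Otimes>\<^sub>M lborel)"
      unfolding lborel_prod using comp_lin_meas[OF assms, of 1 0 t 1] by (simp add: add.commute)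
    show ?thesis using lborel.nn_integral_fst[OF m] by simp
  qed
  also have "\<dots> = (\<integral>\<^sup>+x. \<integral>\<^sup>+y. H (x, y) \<partial>lborel \<partial>lborel)"
  proof (rule nn_integral_cong)
    fix x :: real
    show "(\<integral>\<^sup>+y. H (x, y + t * x) \<partial>lborel) = (\<integral>\<^sup>+y. H (x, y) \<partial>lborel)"
      using nn_integral_real_affine[of "\<lambda>y. H (x, y)" 1 "t * x"]
      by (simp add: add.commute)
  qed
  also have "\<dots> = (\<integral>\<^sup>+p. H p \<partial>(lborel \<Otimes>\<^sub>M lborel))"
  proof -
    have m: "H \<in> borel_measurable (lborel \<Otimes>\<^sub>M lborel)"
      unfolding lborel_prod using assms by simp
    show ?thesis using lborel.nn_integral_fst[OF m] by simp
  qed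
  also have "\<dots> = (\<integral>\<^sup>+p. H p \<partial>lborel)"
    by (simp only: lborel_prod)
  finally show ?thesis .
qed

lemma rot_nz:
  fixes H :: "real \<times> real \<Rightarrow> ennreal"
  assumes [measurable]: "H \<in> borel_measurable borel" and cs: "c\<^sup>2 + s\<^sup>2 = 1" and s: "s \<noteq> 0"
  shows "(\<integral>\<^sup>+p. H (c * fst p - s * snd p, s * fst p + c * snd p) \<partial>lborel) = (\<integral>\<^sup>+p. H p \<partial>lborel)"
proof -
  define t where "t = (c - 1) / s"
  let ?H1 = "\<lambda>p. H (fst p + t * snd p, snd p)"
  let ?H2 = "\<lambda>p. ?H1 (fst p, snd p + s * fst p)"
  have m1: "?H1 \<in> borel_measurable borel" using comp_lin_meas[OF assms(1), of 1 t 0 1] by simp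
  have m2: "?H2 \<in> borel_measurable borel" using comp_lin_meas[OF m1, of 1 0 s 1] by (simp add: add.commute)
  have ts: "t * s = c - 1" using s by (simp add: t_def)
  have k2: "t * (1 + t * s) + t = - s"
  proof -
    have c: "c = t * s + 1" using ts by simp
    have "t * (1 + t * s) + t = t * (c + 1)" unfolding c by (simp add: algebra_simps)
    also have "\<dots> = (c - 1) * (c + 1) / s" by (simp add: t_def)
    also have "(c - 1) * (c + 1) = - (s * s)" using cs by (simp add: power2_eq_square algebra_simps)
    finally show ?thesis using s by simp
  qed
  have eq: "(c * fst p - s * snd p, s * fst p + c * snd p) =
     (let q = (fst p + t * snd p, snd p) in let q2 = (fst q, snd q + s * fst q) in (fst q2 + t * snd q2, snd q2))" for p
  proof -
    obtain x y where p: "p = (x, y)" by (cases p)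
    have c: "1 + t * s = c" using ts by simp
    have e1: "x + t * y + t * (y + s * (x + t * y)) = c * x - s * y"
    proof -
      have "x + t * y + t * (y + s * (x + t * y)) = (1 + t * s) * x + (t * (1 + t * s) + t) * y"
        by (simp add: algebra_simps)
      also have "\<dots> = c * x + (- s) * y" by (simp only: k2, simp only: c)
      finally show ?thesis by simp
    qed
    have e2: "y + s * (x + t * y) = s * x + c * y"
    proof -
      have "y + s * (x + t * y) = s * x + (1 + t * s) * y" by (simp add: algebra_simps)
      also have "\<dots> = s * x + c * y" by (simp only: c)
      finally show ?thesis .
    qed
    show ?thesis unfolding p Let_def fst_conv snd_conv by (simp only: e1, simp only: e2)
  qed
  have "(\<integral>\<^sup>+p. H (c * fst p - s * snd p, s * fst p + c * snd p) \<partial>lborel)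
      = (\<integral>\<^sup>+p. ?H2 (fst p + t * snd p, snd p) \<partial>lborel)"
    by (simp add: eq Let_def)
  also have "\<dots> = (\<integral>\<^sup>+p. ?H2 p \<partial>lborel)" by (rule shear1[OF m2])
  also have "\<dots> = (\<integral>\<^sup>+p. ?H1 p \<partial>lborel)" by (rule shear2[OF m1])
  also have "\<dots> = (\<integral>\<^sup>+p. H p \<partial>lborel)" by (rule shear1[OF assms(1)])
  finally show ?thesis .
qed

lemma fst_meas_borel[measurable]: "fst \<in> borel_measurable (borel :: (real \<times> real) measure)"
  by (intro borel_measurable_continuous_onI continuous_intros)

lemma snd_meas_borel[measurable]: "snd \<in> borel_measurable (borel :: (real \<times> real) measure)"
  by (intro borel_measurable_continuous_onI continuous_intros)

lemma rot:
  fixes H :: "real \<times> real \<Rightarrow> ennreal"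
  assumes [measurable]: "H \<in> borel_measurable borel" and cs: "c\<^sup>2 + s\<^sup>2 = 1"
  shows "(\<integral>\<^sup>+p. H (c * fst p - s * snd p, s * fst p + c * snd p) \<partial>lborel) = (\<integral>\<^sup>+p. H p \<partial>lborel)"
proof (cases "s = 0")
  case False
  then show ?thesis using rot_nz[OF assms] by simp
next
  case True
  then have "c = 1 \<or> c = -1" using cs by (simp add: power2_eq_1_iff)
  then show ?thesis
  proof
    assume "c = 1" then show ?thesis using True by simp
  next
    assume c: "c = -1"
    define H' where "H' = (\<lambda>p. H (- snd p, fst p))"
    have m: "H' \<in> borel_measurable borel" unfolding H'_def
      using comp_lin_meas[OF assms(1), of 0 "-1" 1 0] by simp
    have "(\<integral>\<^sup>+p. H' (0 * fst p - 1 * snd p, 1 * fst p + 0 * snd p) \<partial>lborel) = (\<integral>\<^sup>+p. H' p \<partial>lborel)"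
      by (rule rot_nz[OF m]) auto
    moreover have "(\<integral>\<^sup>+p. H (0 * fst p - 1 * snd p, 1 * fst p + 0 * snd p) \<partial>lborel) = (\<integral>\<^sup>+p. H p \<partial>lborel)"
      by (rule rot_nz[OF assms(1)]) auto
    ultimately show ?thesis using True c by (simp add: H'_def)
  qed
qed

lemma nd_rot:
  assumes cs: "c\<^sup>2 + s\<^sup>2 = 1"
  shows "normal_density (c * r) 1 (c * x - s * y) * normal_density (s * r) 1 (s * x + c * y)
       = normal_density r 1 x * normal_density 0 1 y"
proof -
  have e: "(c * x - s * y - c * r)\<^sup>2 + (s * x + c * y - s * r)\<^sup>2 = (x - r)\<^sup>2 + (y - 0)\<^sup>2"
  proof -
    have "(c * x - s * y - c * r)\<^sup>2 + (s * x + c * y - s * r)\<^sup>2 = (c\<^sup>2 + s\<^sup>2) * ((x - r)\<^sup>2 + y\<^sup>2)"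
      by (simp add: power2_eq_square algebra_simps)
    then show ?thesis using cs by simp
  qed
  have "\<And>u v w z :: real. u\<^sup>2 + v\<^sup>2 = w\<^sup>2 + z\<^sup>2 \<Longrightarrow>
     exp (- u\<^sup>2 / 2) * exp (- v\<^sup>2 / 2) = exp (- w\<^sup>2 / 2) * exp (- z\<^sup>2 / 2)"
    by (simp add: exp_add[symmetric] add_divide_distrib[symmetric])
  from this[OF e] show ?thesis
    unfolding normal_density_def by (simp add: power2_eq_square)
qed

definition N1 :: "real \<Rightarrow> real measure" where
  "N1 m = density lborel (\<lambda>x. ennreal (normal_density m 1 x))"

lemma N1_pair:
  "N1 a \<Otimes>\<^sub>M N1 b = density lborel (\<lambda>z. ennreal (normal_density a 1 (fst z) * normal_density b 1 (snd z)))"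
proof -
  have "N1 a \<Otimes>\<^sub>M N1 b = density (lborel \<Otimes>\<^sub>M lborel)
      (\<lambda>(x,y). ennreal (normal_density a 1 x) * ennreal (normal_density b 1 y))"
    unfolding N1_def
  proof (rule pair_measure_density)
    show "sigma_finite_measure (density lborel (\<lambda>x. ennreal (normal_density b 1 x)))"
      using prob_space_normal_density[of 1 b] by (simp add: prob_space_imp_sigma_finite)
  qed (auto intro: lborel.sigma_finite_measure_axioms)
  also have "\<dots> = density lborel (\<lambda>z. ennreal (normal_density a 1 (fst z) * normal_density b 1 (snd z)))"
    unfolding lborel_prod
    by (intro density_cong) (auto simp: ennreal_mult' normal_density_nonneg split: prod.splits)
  finally show ?thesis .
qed

lemma core:
  "distr (N1 a \<Otimes>\<^sub>M N1 b) borel (\<lambda>z. (fst z)\<^sup>2 + (snd z)\<^sup>2)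
   = distr (N1 (sqrt (a\<^sup>2 + b\<^sup>2)) \<Otimes>\<^sub>M N1 0) borel (\<lambda>z. (fst z)\<^sup>2 + (snd z)\<^sup>2)"
proof (cases "a\<^sup>2 + b\<^sup>2 = 0")
  case True
  then have "a = 0" "b = 0" by (auto simp: add_nonneg_eq_0_iff)
  then show ?thesis by simp
next
  case False
  define r where "r = sqrt (a\<^sup>2 + b\<^sup>2)"
  have r: "r > 0" using False unfolding r_def
    by (simp add: add_nonneg_nonneg order_le_neq_trans)
  define c where "c = a / r"
  define s where "s = b / r"
  have cs: "c\<^sup>2 + s\<^sup>2 = 1" using r False
    by (simp add: c_def s_def r_def power_divide add_divide_distrib[symmetric])
  have a: "a = c * r" and b: "b = s * r" using r by (simp_all add: c_def s_def)
  let ?q = "\<lambda>z::real\<times>real. (fst z)\<^sup>2 + (snd z)\<^sup>2"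
  have [measurable]: "?q \<in> borel_measurable borel" by measurable
  show ?thesis
    unfolding r_def[symmetric]
  proof (rule measure_eqI)
    fix A :: "real set" assume A[measurable]: "A \<in> sets (distr (N1 a \<Otimes>\<^sub>M N1 b) borel ?q)"
    let ?f = "\<lambda>a b z. ennreal (normal_density a 1 (fst z) * normal_density b 1 (snd z))"
    have mf[measurable]: "?f a b \<in> borel_measurable borel" for a b by measurable
    have E: "emeasure (distr (N1 a \<Otimes>\<^sub>M N1 b) borel ?q) A =
       (\<integral>\<^sup>+z. ?f a b z * indicator A (?q z) \<partial>lborel)" for a b
    proof -
      have "emeasure (distr (N1 a \<Otimes>\<^sub>M N1 b) borel ?q) A = emeasure (density lborel (?f a b)) (?q -` A)"
        using A by (simp add: emeasure_distr N1_pair)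
      also have "\<dots> = (\<integral>\<^sup>+z. ?f a b z * indicator (?q -` A) z \<partial>lborel)"
      proof (rule emeasure_density)
        have "?q -` A \<inter> space borel \<in> sets borel"
          using A by (intro measurable_sets[of ?q borel borel]) auto
        then show "?q -` A \<in> sets lborel" by simp
      qed measurable
      finally show ?thesis by (simp add: indicator_def)
    qed
    have "(\<integral>\<^sup>+z. ?f a b z * indicator A (?q z) \<partial>lborel)
       = (\<integral>\<^sup>+p. (\<lambda>z. ?f a b z * indicator A (?q z)) (c * fst p - s * snd p, s * fst p + c * snd p) \<partial>lborel)"
      using A by (subst rot[OF _ cs]) auto
    also have "\<dots> = (\<integral>\<^sup>+z. ?f r 0 z * indicator A (?q z) \<partial>lborel)"
    proof (rule nn_integral_cong)
      fix p :: "real \<times> real"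
      obtain x y where p: "p = (x, y)" by (cases p)
      have "?q (c * x - s * y, s * x + c * y) = ?q (x, y)"
      proof -
        have "(c * x - s * y)\<^sup>2 + (s * x + c * y)\<^sup>2 = (c\<^sup>2 + s\<^sup>2) * (x\<^sup>2 + y\<^sup>2)"
          by (simp add: power2_eq_square algebra_simps)
        then show ?thesis using cs by simp
      qed
      then show "(\<lambda>z. ?f a b z * indicator A (?q z)) (c * fst p - s * snd p, s * fst p + c * snd p)
          = ?f r 0 p * indicator A (?q p)"
        unfolding p a b using nd_rot[OF cs, of r x y] by simp
    qed
    finally show "emeasure (distr (N1 a \<Otimes>\<^sub>M N1 b) borel ?q) A
        = emeasure (distr (N1 r \<Otimes>\<^sub>M N1 0) borel ?q) A"
      unfolding E .
  qed simp
qed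

lemma prob_N1: "prob_space (N1 m)"
  unfolding N1_def using prob_space_normal_density[of 1 m] by simp

lemma sets_N1[simp, measurable_cong]: "sets (N1 m) = sets borel"
  by (simp add: N1_def)

lemma normal_measure_1: "normal_measure m 1 = N1 m"
  by (simp add: normal_measure_def N1_def)

lemma PiM2:
  "distr (PiM {..<2} (\<lambda>k::nat. N1 (if k = 0 then m else 0))) borel (\<lambda>z. \<Sum>k<2. (z k)\<^sup>2)
   = distr (N1 m \<Otimes>\<^sub>M N1 0) borel (\<lambda>z. (fst z)\<^sup>2 + (snd z)\<^sup>2)"
proof -
  let ?M = "\<lambda>k::nat. N1 (if k = 0 then m else 0)"
  interpret ps: product_sigma_finite ?M
    unfolding product_sigma_finite_def
    using prob_N1 by (auto intro: prob_space_imp_sigma_finite)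
  have I: "{..<2::nat} = {0, 1}" by auto
  show ?thesis
  proof (rule measure_eqI)
    fix A :: "real set" assume A: "A \<in> sets (distr (PiM {..<2} ?M) borel (\<lambda>z. \<Sum>k<2. (z k)\<^sup>2))"
    then have A[measurable]: "A \<in> sets borel" by simp
    have m1: "(\<lambda>z. \<Sum>k<2. (z k)\<^sup>2) \<in> borel_measurable (PiM {..<2} ?M)" by measurable
    have m2: "(\<lambda>z. (fst z)\<^sup>2 + (snd z)\<^sup>2) \<in> borel_measurable (N1 m \<Otimes>\<^sub>M N1 0)" by measurable
    have "emeasure (distr (PiM {..<2} ?M) borel (\<lambda>z. \<Sum>k<2. (z k)\<^sup>2)) A
       = emeasure (PiM {..<2} ?M) ((\<lambda>z. \<Sum>k<2. (z k)\<^sup>2) -` A \<inter> space (PiM {..<2} ?M))"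
      using m1 by (simp add: emeasure_distr)
    also have "\<dots> = (\<integral>\<^sup>+z. indicator ((\<lambda>z. \<Sum>k<2. (z k)\<^sup>2) -` A \<inter> space (PiM {..<2} ?M)) z \<partial>PiM {..<2} ?M)"
      using m1 A by (subst nn_integral_indicator) (auto intro: measurable_sets)
    also have "\<dots> = (\<integral>\<^sup>+z. indicator A ((z 0)\<^sup>2 + (z 1)\<^sup>2) \<partial>PiM {0, 1} ?M)"
      unfolding I by (intro nn_integral_cong) (auto simp: indicator_def)
    also have "\<dots> = (\<integral>\<^sup>+z. indicator A ((fst z)\<^sup>2 + (snd z)\<^sup>2) \<partial>(?M 0 \<Otimes>\<^sub>M ?M 1))"
      by (subst ps.product_nn_integral_pair[of "\<lambda>u v. indicator A (u\<^sup>2 + v\<^sup>2)"]) auto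
    also have "\<dots> = (\<integral>\<^sup>+z. indicator A ((fst z)\<^sup>2 + (snd z)\<^sup>2) \<partial>(N1 m \<Otimes>\<^sub>M N1 0))"
      by simp
    also have "\<dots> = (\<integral>\<^sup>+z. indicator ((\<lambda>z. (fst z)\<^sup>2 + (snd z)\<^sup>2) -` A \<inter> space (N1 m \<Otimes>\<^sub>M N1 0)) z \<partial>(N1 m \<Otimes>\<^sub>M N1 0))"
      by (intro nn_integral_cong) (auto simp: indicator_def)
    also have "\<dots> = emeasure (N1 m \<Otimes>\<^sub>M N1 0) ((\<lambda>z. (fst z)\<^sup>2 + (snd z)\<^sup>2) -` A \<inter> space (N1 m \<Otimes>\<^sub>M N1 0))"
      using measurable_sets[OF m2 A] by (subst nn_integral_indicator) auto
    also have "\<dots> = emeasure (distr (N1 m \<Otimes>\<^sub>M N1 0) borel (\<lambda>z. (fst z)\<^sup>2 + (snd z)\<^sup>2)) A"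
      using m2 A by (subst emeasure_distr) auto
    finally show "emeasure (distr (PiM {..<2} ?M) borel (\<lambda>z. \<Sum>k<2. (z k)\<^sup>2)) A
       = emeasure (distr (N1 m \<Otimes>\<^sub>M N1 0) borel (\<lambda>z. (fst z)\<^sup>2 + (snd z)\<^sup>2)) A" .
  next
    show "sets (distr (PiM {..<2} ?M) borel (\<lambda>z. \<Sum>k<2. (z k)\<^sup>2)) = sets (distr (N1 m \<Otimes>\<^sub>M N1 0) borel (\<lambda>z. (fst z)\<^sup>2 + (snd z)\<^sup>2))" by simp
  qed
qed

theorem theorem1:
  fixes P :: "'a measure"
    and M :: nat
    and \<kappa> \<beta> \<phi> :: real
    and \<psi> :: "nat \<Rightarrow> real"
    and R :: "nat \<Rightarrow> nat \<Rightarrow> real"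
    and hx hy :: "nat \<Rightarrow> 'a \<Rightarrow> real"
  assumes "prob_space P"
    and "M \<ge> 2"
    and "\<kappa> \<ge> 0"
    and "\<beta> > 0"
    and "0 \<le> \<phi>" and "\<phi> \<le> 2 * pi"
    and "\<forall>t\<in>{1..M-1}. 0 \<le> \<psi> t \<and> \<psi> t \<le> 2 * pi"
    and "\<forall>i<M. \<forall>j<M. R i j = R j i"
    and "\<forall>v :: nat \<Rightarrow> real. (\<Sum>i<M. \<Sum>j<M. v i * R i j * v j) \<ge> 0"
    and "(\<Sum>i<M. \<Sum>j<M. R i j) > 0"
    and "gaussian_vec P M hx
           (\<lambda>i. sqrt (\<kappa> / (2 * (\<kappa> + 1))) *
              (if i = 0 then 1
               else cos (- real i * pi * sin \<phi> + \<psi> i) - sin (- real i * pi * sin \<phi> + \<psi> i)))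
           (\<lambda>i j. R i j / (2 * (\<kappa> + 1)))"
    and "gaussian_vec P M hy
           (\<lambda>i. sqrt (\<kappa> / (2 * (\<kappa> + 1))) *
              (if i = 0 then 1
               else cos (- real i * pi * sin \<phi> + \<psi> i) + sin (- real i * pi * sin \<phi> + \<psi> i)))
           (\<lambda>i j. R i j / (2 * (\<kappa> + 1)))"
    and "prob_space.indep_var P
           (PiM {..<M} (\<lambda>_. borel)) (\<lambda>\<omega>. \<lambda>i\<in>{..<M}. hx i \<omega>)
           (PiM {..<M} (\<lambda>_. borel)) (\<lambda>\<omega>. \<lambda>i\<in>{..<M}. hy i \<omega>)"
  shows "scaled_chi2_distributed P
           (\<lambda>\<omega>. \<beta> / real M * (cmod (\<Sum>i<M. Complex (hx i \<omega>) (hy i \<omega>)))\<^sup>2)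
           (\<beta> * (\<Sum>i<M. \<Sum>j<M. R i j) / (2 * (\<kappa> + 1) * real M))
           2
           (2 * \<kappa> *
              ((1 + (\<Sum>t\<in>{1..M-1}. cos (\<psi> t + (- real t * pi * sin \<phi>))))\<^sup>2
               + (\<Sum>t\<in>{1..M-1}. sin (\<psi> t + (- real t * pi * sin \<phi>)))\<^sup>2)
            / (\<Sum>i<M. \<Sum>j<M. R i j))"
proof -
  interpret P: prob_space P by fact
  note gx = assms(11) and gy = assms(12) and ind = assms(13)
  let ?u1 = "1 + (\<Sum>t\<in>{1..M-1}. cos (\<psi> t + (- real t * pi * sin \<phi>)))"
  let ?u2 = "\<Sum>t\<in>{1..M-1}. sin (\<psi> t + (- real t * pi * sin \<phi>))"
  define RS where "RS = (\<Sum>i<M. \<Sum>j<M. R i j)"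
  have RS: "RS > 0" using assms(10) by (simp add: RS_def)
  have k1: "\<kappa> + 1 > 0" using assms(3) by simp
  define V where "V = RS / (2 * (\<kappa> + 1))"
  have V: "V > 0" using RS k1 by (simp add: V_def)
  define w where "w = 1 / sqrt V"
  have w2: "w * w = 1 / V" using V by (simp add: w_def)
  define sk where "sk = sqrt (\<kappa> / (2 * (\<kappa> + 1)))"
  have sk2: "sk * sk = \<kappa> / (2 * (\<kappa> + 1))" using assms(3) k1 by (simp add: sk_def)
  define mx where "mx = (\<lambda>i. sqrt (\<kappa> / (2 * (\<kappa> + 1))) *
              (if i = 0 then 1
               else cos (- real i * pi * sin \<phi> + \<psi> i) - sin (- real i * pi * sin \<phi> + \<psi> i)))"
  define my where "my = (\<lambda>i. sqrt (\<kappa> / (2 * (\<kappa> + 1))) *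
              (if i = 0 then 1
               else cos (- real i * pi * sin \<phi> + \<psi> i) + sin (- real i * pi * sin \<phi> + \<psi> i)))"
  define C where "C = (\<lambda>i j. R i j / (2 * (\<kappa> + 1)))"
  define Zx where "Zx = (\<lambda>\<omega>. \<Sum>i<M. w * hx i \<omega>)"
  define Zy where "Zy = (\<lambda>\<omega>. \<Sum>i<M. w * hy i \<omega>)"
  define ax where "ax = (\<Sum>i<M. w * mx i)"
  define ay where "ay = (\<Sum>i<M. w * my i)"
  have var1: "(\<Sum>i<M. \<Sum>j<M. w * C i j * w) = 1"
  proof -
    have "(\<Sum>i<M. \<Sum>j<M. w * C i j * w) = (\<Sum>i<M. \<Sum>j<M. (w * w / (2 * (\<kappa> + 1))) * R i j)"
      by (intro sum.cong refl) (simp add: C_def)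
    also have "\<dots> = (w * w / (2 * (\<kappa> + 1))) * RS"
      by (simp add: RS_def sum_distrib_left)
    also have "\<dots> = 1"
    proof -
      have "RS * (\<kappa> * 2) \<ge> 0" using RS assms(3) by simp
      then have nz: "RS * 2 + RS * (\<kappa> * 2) \<noteq> 0" using RS by linarith
      show ?thesis using V k1 nz unfolding w2 V_def by (simp add: field_simps)
    qed
    finally show ?thesis .
  qed
  have gx': "gaussian_vec P M hx mx C" using gx unfolding mx_def C_def .
  have gy': "gaussian_vec P M hy my C" using gy unfolding my_def C_def .
  have mhx[measurable]: "\<And>i. i < M \<Longrightarrow> hx i \<in> borel_measurable P"
    using gx' unfolding gaussian_vec_def by blast
  have mhy[measurable]: "\<And>i. i < M \<Longrightarrow> hy i \<in> borel_measurable P"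
    using gy' unfolding gaussian_vec_def by blast
  have dZx: "distr P borel Zx = N1 ax"
    using gx' var1 unfolding gaussian_vec_def Zx_def ax_def
    by (auto simp: normal_measure_1 elim!: allE[where x="\<lambda>_. w"])
  have dZy: "distr P borel Zy = N1 ay"
    using gy' var1 unfolding gaussian_vec_def Zy_def ay_def
    by (auto simp: normal_measure_1 elim!: allE[where x="\<lambda>_. w"])
  have mY: "(\<lambda>f. \<Sum>i<M. w * f i) \<in> borel_measurable (PiM {..<M} (\<lambda>_. borel))"
    by measurable
  have indZ: "P.indep_var borel Zx borel Zy"
  proof -
    have "P.indep_var borel ((\<lambda>f. \<Sum>i<M. w * f i) \<circ> (\<lambda>\<omega>. \<lambda>i\<in>{..<M}. hx i \<omega>))
                      borel ((\<lambda>f. \<Sum>i<M. w * f i) \<circ> (\<lambda>\<omega>. \<lambda>i\<in>{..<M}. hy i \<omega>))"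
      by (rule P.indep_var_compose[OF ind mY mY])
    moreover have "((\<lambda>f. \<Sum>i<M. w * f i) \<circ> (\<lambda>\<omega>. \<lambda>i\<in>{..<M}. hx i \<omega>)) = Zx"
      by (auto simp: Zx_def o_def intro!: sum.cong)
    moreover have "((\<lambda>f. \<Sum>i<M. w * f i) \<circ> (\<lambda>\<omega>. \<lambda>i\<in>{..<M}. hy i \<omega>)) = Zy"
      by (auto simp: Zy_def o_def intro!: sum.cong)
    ultimately show ?thesis by simp
  qed
  have joint: "distr P (borel \<Otimes>\<^sub>M borel) (\<lambda>\<omega>. (Zx \<omega>, Zy \<omega>)) = N1 ax \<Otimes>\<^sub>M N1 ay"
    using indZ unfolding P.indep_var_distribution_eq dZx dZy by simp
  define c where "c = \<beta> * V / real M"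
  let ?q = "\<lambda>z::real\<times>real. (fst z)\<^sup>2 + (snd z)\<^sup>2"
  have Xeq: "(\<lambda>\<omega>. \<beta> / real M * (cmod (\<Sum>i<M. Complex (hx i \<omega>) (hy i \<omega>)))\<^sup>2)
       = (\<lambda>\<omega>. c * ?q (Zx \<omega>, Zy \<omega>))"
  proof
    fix \<omega>
    have "(\<Sum>i<M. Complex (hx i \<omega>) (hy i \<omega>)) = Complex (\<Sum>i<M. hx i \<omega>) (\<Sum>i<M. hy i \<omega>)"
      by (simp add: complex_eq_iff Re_sum Im_sum)
    moreover have "(\<Sum>i<M. hx i \<omega>) = sqrt V * Zx \<omega>" "(\<Sum>i<M. hy i \<omega>) = sqrt V * Zy \<omega>"
      using V by (simp_all add: Zx_def Zy_def w_def sum_divide_distrib[symmetric])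
    ultimately show "\<beta> / real M * (cmod (\<Sum>i<M. Complex (hx i \<omega>) (hy i \<omega>)))\<^sup>2 = c * ?q (Zx \<omega>, Zy \<omega>)"
      using V by (simp add: cmod_def c_def power_mult_distrib algebra_simps)
  qed
  have mZ[measurable]: "Zx \<in> borel_measurable P" "Zy \<in> borel_measurable P"
    by (auto simp: Zx_def Zy_def)
  have RSc: "\<beta> * (\<Sum>i<M. \<Sum>j<M. R i j) / (2 * (\<kappa> + 1) * real M) = c"
    by (simp add: c_def V_def RS_def)
  define nc where "nc = 2 * \<kappa> * (?u1\<^sup>2 + ?u2\<^sup>2) / (\<Sum>i<M. \<Sum>j<M. R i j)"
  have split: "(\<Sum>i<M. f i) = f 0 + (\<Sum>t\<in>{1..M-1}. f t)" for f :: "nat \<Rightarrow> real"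
  proof -
    have "{..<M} = insert 0 {1..M-1}" using assms(2) by auto
    then show ?thesis by simp
  qed
  have ax: "ax = w * sk * (?u1 - ?u2)"
  proof -
    have "ax = w * sk * (\<Sum>i<M. (if i = 0 then 1
               else cos (- real i * pi * sin \<phi> + \<psi> i) - sin (- real i * pi * sin \<phi> + \<psi> i)))"
      by (simp add: ax_def mx_def sk_def sum_distrib_left mult.assoc)
    also have "\<dots> = w * sk * (?u1 - ?u2)"
      by (subst split) (simp add: sum_subtractf add.commute)
    finally show ?thesis .
  qed
  have ay: "ay = w * sk * (?u1 + ?u2)"
  proof -
    have "ay = w * sk * (\<Sum>i<M. (if i = 0 then 1
               else cos (- real i * pi * sin \<phi> + \<psi> i) + sin (- real i * pi * sin \<phi> + \<psi> i)))"
      by (simp add: ay_def my_def sk_def sum_distrib_left mult.assoc)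
    also have "\<dots> = w * sk * (?u1 + ?u2)"
      by (subst split) (simp add: sum.distrib add.commute)
    finally show ?thesis .
  qed
  have ncr: "nc = ax\<^sup>2 + ay\<^sup>2"
  proof -
    have "ax\<^sup>2 + ay\<^sup>2 = (w * w) * (sk * sk) * (2 * (?u1\<^sup>2 + ?u2\<^sup>2))"
      unfolding ax ay by (simp add: power2_eq_square algebra_simps)
    also have "\<dots> = nc"
    proof -
      have "RS * (\<kappa> * 2) \<ge> 0" using RS assms(3) by simp
      then have nz: "RS * 2 + RS * (\<kappa> * 2) \<noteq> 0" using RS by linarith
      show ?thesis unfolding w2 sk2 nc_def V_def RS_def[symmetric] using k1 RS nz
        by (simp add: field_simps)
    qed
    finally show ?thesis by simp
  qed
  have mq[measurable]: "?q \<in> borel_measurable (borel \<Otimes>\<^sub>M borel)" by measurable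
  have mc[measurable]: "(\<lambda>x::real. c * x) \<in> borel_measurable borel" by measurable
  have "distr P borel (\<lambda>\<omega>. c * ?q (Zx \<omega>, Zy \<omega>))
      = distr (distr P (borel \<Otimes>\<^sub>M borel) (\<lambda>\<omega>. (Zx \<omega>, Zy \<omega>))) borel (\<lambda>z. c * ?q z)"
    by (subst distr_distr) (auto simp: o_def)
  also have "\<dots> = distr (N1 ax \<Otimes>\<^sub>M N1 ay) borel (\<lambda>z. c * ?q z)" by (simp only: joint)
  also have "\<dots> = distr (distr (N1 ax \<Otimes>\<^sub>M N1 ay) borel ?q) borel (\<lambda>x. c * x)"
    by (subst distr_distr) (auto simp: o_def)
  also have "\<dots> = distr (distr (N1 (sqrt nc) \<Otimes>\<^sub>M N1 0) borel ?q) borel (\<lambda>x. c * x)"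
    by (subst core) (simp only: ncr)
  also have "\<dots> = distr (noncentral_chi2 2 nc) borel (\<lambda>x. c * x)"
    unfolding noncentral_chi2_def normal_measure_1 PiM2 ..
  finally have D: "distr P borel (\<lambda>\<omega>. c * ?q (Zx \<omega>, Zy \<omega>)) = distr (noncentral_chi2 2 nc) borel (\<lambda>x. c * x)" .
  show ?thesis
    unfolding scaled_chi2_distributed_def Xeq RSc nc_def[symmetric]
    using D by simp
qed

end
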